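(* Let $G$ be a finite group and $H$ a normal subgroup of $G$ containing $G'$ such that $|H|$ divides $[G:H]$. Then the square \[ \begin{array}{ccc} G/H & \xrightarrow{\ \widetilde{\operatorname{Ver}}\ } & H/H'\\ \downarrow{\scriptstyle \delta|_H} & & \downarrow{\scriptstyle\delta}\\ \dfrac{I_G/I_G^2}{\delta(H/G')} & \xrightarrow{\ S'\ } & \dfrac{I_H+I_GI_H}{I_GI_H} \end{array} \] commutes.
   Context: $I_G$ is the augmentation ideal of $\mathbb{Z}[G]$ (kernel of $\sum n_\sigma\sigma\mapsto\sum n_\sigma$), similarly $I_H\subseteq I_G$. $\delta\colon G/G'\to I_G/I_G^2$, $\sigma G'\mapsto(\sigma-1)+I_G^2$, and $\delta\colon H/H'\to(I_H+I_GI_H)/I_GI_H$, $hH'\mapsto(h-1)+I_GI_H$, are the canonical isomorphisms. $\delta|_H\colon G/H\to(I_G/I_G^2)/\delta(H/G')$ is the isomorphism induced by $\delta$ via $G/H\cong(G/G')/(H/G')$. With $g_1,\dots,g_n$ coset representatives of $H$ in $G$, $S\colon I_G/I_G^2\to(I_H+I_GI_H)/I_GI_H$ is $S(x)=x\cdot(g_1+\cdots+g_n)\bmod I_GI_H$, and $S'$ is the induced map on $(I_G/I_G^2)/\delta(H/G')$, $S'([x])=S(x)$. The transfer $\operatorname{Ver}(G\to H)\colon G/G'\to H/H'$ is induced by $g\mapsto\prod_i\phi(gg_i)^{-1}gg_i$ where $\phi(g)=g_k$ if $g\in g_kH$; $\widetilde{\operatorname{Ver}}\colon G/H\to H/H'$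 is the map it induces (well defined when $\operatorname{Ver}(G\to H)$ sends $H$ into $H'$). *)

theory Defs
  imports "HOL-Algebra.Solvable_Groups" "HOL-Algebra.Left_Coset" "HOL-Library.Function_Algebras"
begin

text \<open>The integral group ring Z[G] of a finite group G is modelled by functions
  'a => int (coefficients), meant to vanish outside carrier G.\<close>

definition gr_elem :: "'a \<Rightarrow> ('a \<Rightarrow> int)" where
  "gr_elem g = (\<lambda>x. if x = g then 1 else 0)"

definition gr_mult :: "('a, 'b) monoid_scheme \<Rightarrow> ('a \<Rightarrow> int) \<Rightarrow> ('a \<Rightarrow> int) \<Rightarrow> ('a \<Rightarrow> int)" where
  "gr_mult G f1 f2 = (\<lambda>x. \<Sum>a\<in>carrier G. \<Sum>b\<in>carrier G.
      if a \<otimes>\<^bsub>G\<^esub> b = x then f1 a * f2 b else 0)"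

definition aug_ideal :: "'a set \<Rightarrow> ('a \<Rightarrow> int) set" where
  "aug_ideal K = {f. (\<forall>x. x \<notin> K \<longrightarrow> f x = 0) \<and> (\<Sum>x\<in>K. f x) = 0}"

inductive_set prod_ideal :: "('a, 'b) monoid_scheme \<Rightarrow> ('a \<Rightarrow> int) set \<Rightarrow> ('a \<Rightarrow> int) set \<Rightarrow> ('a \<Rightarrow> int) set"
  for G A B where
  zero: "0 \<in> prod_ideal G A B"
| gen: "a \<in> A \<Longrightarrow> b \<in> B \<Longrightarrow> gr_mult G a b \<in> prod_ideal G A B"
| add: "u \<in> prod_ideal G A B \<Longrightarrow> v \<in> prod_ideal G A B \<Longrightarrow> u + v \<in> prod_ideal G A B"
| neg: "u \<in> prod_ideal G A B \<Longrightarrow> - u \<in> prod_ideal G A B"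

definition coset_reps :: "('a, 'b) monoid_scheme \<Rightarrow> 'a set \<Rightarrow> 'a list \<Rightarrow> bool" where
  "coset_reps G H gs \<longleftrightarrow> set gs \<subseteq> carrier G \<and>
     (\<forall>x\<in>carrier G. \<exists>!i. i < length gs \<and> x \<in> (gs ! i) <#\<^bsub>G\<^esub> H)"

definition coset_rep :: "('a, 'b) monoid_scheme \<Rightarrow> 'a set \<Rightarrow> 'a list \<Rightarrow> 'a \<Rightarrow> 'a" where
  "coset_rep G H gs x = (THE r. r \<in> set gs \<and> x \<in> r <#\<^bsub>G\<^esub> H)"

definition ver_rep :: "('a, 'b) monoid_scheme \<Rightarrow> 'a set \<Rightarrow> 'a list \<Rightarrow> 'a \<Rightarrow> 'a" where
  "ver_rep G H gs g = foldr (\<lambda>r acc. (inv\<^bsub>G\<^esub> (coset_rep G H gs (g \<otimes>\<^bsub>G\<^esub> r)) \<otimes>\<^bsub>G\<^esub> (g \<otimes>\<^bsub>G\<^esub> r)) \<otimes>\<^bsub>G\<^esub> acc)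
      gs \<one>\<^bsub>G\<^esub>"

end

theory Submission
  imports Defs
begin

lemma gr_mult_add_left: "gr_mult G (f1 + f2) f3 = gr_mult G f1 f3 + gr_mult G f2 f3"
  by (auto simp: gr_mult_def fun_eq_iff sum.distrib[symmetric] distrib_right intro!: sum.cong)
lemma gr_mult_add_right: "gr_mult G f3 (f1 + f2) = gr_mult G f3 f1 + gr_mult G f3 f2"
  by (auto simp: gr_mult_def fun_eq_iff sum.distrib[symmetric] distrib_left intro!: sum.cong)
lemma gr_mult_diff_left: "gr_mult G (f1 - f2) f3 = gr_mult G f1 f3 - gr_mult G f2 f3"
  by (auto simp: gr_mult_def fun_eq_iff sum_subtractf[symmetric] left_diff_distrib intro!: sum.cong)
lemma gr_mult_diff_right: "gr_mult G f3 (f1 - f2) = gr_mult G f3 f1 - gr_mult G f3 f2"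
  by (auto simp: gr_mult_def fun_eq_iff sum_subtractf[symmetric] right_diff_distrib intro!: sum.cong)
lemma gr_mult_zero_right: "gr_mult G f (0::'a\<Rightarrow>int) = 0"
  unfolding gr_mult_def by (rule ext) (simp only: zero_fun_apply mult_zero_right if_cancel sum.neutral_const)
lemma gr_mult_sum_list_right: "gr_mult G f (\<Sum>r\<leftarrow>xs. u r) = (\<Sum>r\<leftarrow>xs. gr_mult G f (u r))"
  by (induction xs) (simp_all only: list.map sum_list.Cons sum_list.Nil gr_mult_add_right gr_mult_zero_right)
lemma gr_mult_elem:
  assumes "finite (carrier G)" "a \<in> carrier G" "b \<in> carrier G"
  shows "gr_mult G (gr_elem a) (gr_elem b) = gr_elem (a \<otimes>\<^bsub>G\<^esub> b)"
proof -
  have "gr_mult G (gr_elem a) (gr_elem b) x = gr_elem (a \<otimes>\<^bsub>G\<^esub> b) x" for x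
  proof -
    have "gr_mult G (gr_elem a) (gr_elem b) x = (\<Sum>a'\<in>carrier G. \<Sum>b'\<in>carrier G. if a' = a then (if b' = b then (if a \<otimes>\<^bsub>G\<^esub> b = x then 1 else 0) else 0) else 0)"
    proof -
      have h: "\<And>a' b'. (if a' \<otimes>\<^bsub>G\<^esub> b' = x then gr_elem a a' * gr_elem b b' else 0) = (if a' = a then (if b' = b then (if a \<otimes>\<^bsub>G\<^esub> b = x then 1 else 0) else 0) else 0)"
        by (auto simp: gr_elem_def)
      then show ?thesis unfolding gr_mult_def by (simp only: h)
    qed
    also have "\<dots> = (\<Sum>a'\<in>carrier G. if a' = a then (if a \<otimes>\<^bsub>G\<^esub> b = x then 1 else 0) else 0)"
    proof (rule sum.cong[OF refl])
      fix a' show "(\<Sum>b'\<in>carrier G. if a' = a then (if b' = b then (if a \<otimes>\<^bsub>G\<^esub> b = x then 1 else 0) else 0) else 0) = (if a' = a then (if a \<otimes>\<^bsub>G\<^esub> b = x then 1 else 0) else 0)"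
        using assms by (cases "a' = a") (simp_all only: if_True if_False sum.delta sum.neutral_const, simp)
    qed
    also have "\<dots> = gr_elem (a \<otimes>\<^bsub>G\<^esub> b) x" using assms by (simp only: sum.delta if_True) (auto simp: gr_elem_def)
    finally show ?thesis .
  qed
  then show ?thesis by auto
qed
lemma prod_ideal_diff: "u \<in> prod_ideal G A B \<Longrightarrow> v \<in> prod_ideal G A B \<Longrightarrow> u - v \<in> prod_ideal G A B"
  using prod_ideal.add[OF _ prod_ideal.neg] by fastforce
lemma prod_ideal_sum_list: "(\<And>r. r \<in> set xs \<Longrightarrow> u r \<in> prod_ideal G A B) \<Longrightarrow> (\<Sum>r\<leftarrow>xs. u r) \<in> prod_ideal G A B"
  by (induction xs) (auto intro: prod_ideal.intros)
lemma aug_elem: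
  assumes "finite K" "a \<in> K" "b \<in> K"
  shows "gr_elem a - gr_elem b \<in> aug_ideal K"
  using assms by (auto simp: aug_ideal_def gr_elem_def sum_subtractf)
lemma key_id:
  assumes "group G" "finite (carrier G)" "a \<in> carrier G" "b \<in> carrier G"
  shows "gr_mult G (gr_elem a - gr_elem \<one>\<^bsub>G\<^esub>) (gr_elem b - gr_elem \<one>\<^bsub>G\<^esub>)
     = gr_elem (a \<otimes>\<^bsub>G\<^esub> b) - gr_elem a - gr_elem b + gr_elem \<one>\<^bsub>G\<^esub>"
proof -
  interpret group G by fact
  show ?thesis using assms
    by (simp add: gr_mult_diff_left gr_mult_diff_right gr_mult_elem algebra_simps)
qed

lemma key_mem:
  assumes "group G" "finite (carrier G)" "subgroup H G" "a \<in> carrier G" "b \<in> H"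
  shows "gr_elem (a \<otimes>\<^bsub>G\<^esub> b) - gr_elem a - gr_elem b + gr_elem \<one>\<^bsub>G\<^esub>
     \<in> prod_ideal G (aug_ideal (carrier G)) (aug_ideal H)"
proof -
  interpret group G by fact
  have Hc: "H \<subseteq> carrier G" using assms(3) subgroup.subset by blast
  have fH: "finite H" using assms(2) Hc finite_subset by blast
  have "gr_mult G (gr_elem a - gr_elem \<one>\<^bsub>G\<^esub>) (gr_elem b - gr_elem \<one>\<^bsub>G\<^esub>)
     \<in> prod_ideal G (aug_ideal (carrier G)) (aug_ideal H)"
    apply (rule prod_ideal.gen)
    using assms fH subgroup.one_closed[OF assms(3)] by (auto intro!: aug_elem)
  then show ?thesis using key_id[OF assms(1,2,4)] assms(5) Hc by auto
qed

lemma lemA: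
  assumes "group G" "finite (carrier G)" "subgroup H G" "\<forall>r\<in>set xs. h r \<in> H"
  shows "foldr (\<lambda>r acc. h r \<otimes>\<^bsub>G\<^esub> acc) xs \<one>\<^bsub>G\<^esub> \<in> H \<and>
    (gr_elem (foldr (\<lambda>r acc. h r \<otimes>\<^bsub>G\<^esub> acc) xs \<one>\<^bsub>G\<^esub>) - gr_elem \<one>\<^bsub>G\<^esub>)
     - (\<Sum>r\<leftarrow>xs. gr_elem (h r) - gr_elem \<one>\<^bsub>G\<^esub>)
     \<in> prod_ideal G (aug_ideal (carrier G)) (aug_ideal H)"
  using assms(4)
proof (induction xs)
  case Nil
  have "foldr (\<lambda>r acc. h r \<otimes>\<^bsub>G\<^esub> acc) [] \<one>\<^bsub>G\<^esub> = \<one>\<^bsub>G\<^esub>" by simp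
  then show ?case using subgroup.one_closed[OF assms(3)] prod_ideal.zero
    by (simp only: list.map sum_list.Nil diff_self diff_zero simp_thms prod_ideal.zero)
next
  case (Cons a xs)
  define F where "F = foldr (\<lambda>r acc. h r \<otimes>\<^bsub>G\<^esub> acc) xs \<one>\<^bsub>G\<^esub>"
  define S where "S = (\<Sum>r\<leftarrow>xs. gr_elem (h r) - gr_elem \<one>\<^bsub>G\<^esub>)"
  have IH: "F \<in> H" "gr_elem F - gr_elem \<one>\<^bsub>G\<^esub> - S \<in> prod_ideal G (aug_ideal (carrier G)) (aug_ideal H)"
  proof -
    have "\<forall>r\<in>set xs. h r \<in> H" using Cons.prems by simp
    from Cons.IH[OF this] show "F \<in> H" "gr_elem F - gr_elem \<one>\<^bsub>G\<^esub> - S \<in> prod_ideal G (aug_ideal (carrier G)) (aug_ideal H)"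
      unfolding F_def S_def by blast+
  qed
  have ha: "h a \<in> H" using Cons by auto
  have Hc: "H \<subseteq> carrier G" using assms(3) subgroup.subset by blast
  have c1: "h a \<otimes>\<^bsub>G\<^esub> F \<in> H" using ha IH subgroup.m_closed[OF assms(3)] by blast
  have eq: "gr_elem (h a \<otimes>\<^bsub>G\<^esub> F) - gr_elem \<one>\<^bsub>G\<^esub> - (gr_elem (h a) - gr_elem \<one>\<^bsub>G\<^esub> + S)
     = (gr_elem (h a \<otimes>\<^bsub>G\<^esub> F) - gr_elem (h a) - gr_elem F + gr_elem \<one>\<^bsub>G\<^esub>) + (gr_elem F - gr_elem \<one>\<^bsub>G\<^esub> - S)"
    by (simp add: algebra_simps)
  have mem: "(gr_elem (h a \<otimes>\<^bsub>G\<^esub> F) - gr_elem (h a) - gr_elem F + gr_elem \<one>\<^bsub>G\<^esub>) + (gr_elem F - gr_elem \<one>\<^bsub>G\<^esub> - S) \<in> prod_ideal G (aug_ideal (carrier G)) (aug_ideal H)"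
    apply (rule prod_ideal.add[OF key_mem[OF assms(1-3)] IH(2)])
    using ha Hc IH by auto
  have c2: "gr_elem (h a \<otimes>\<^bsub>G\<^esub> F) - gr_elem \<one>\<^bsub>G\<^esub> - (gr_elem (h a) - gr_elem \<one>\<^bsub>G\<^esub> + S) \<in> prod_ideal G (aug_ideal (carrier G)) (aug_ideal H)"
    by (subst eq) (rule mem)
  show ?case using c1 c2 unfolding F_def S_def by (simp only: foldr.simps o_apply list.map sum_list.Cons simp_thms)
qed
theorem lemma3p7:
  fixes G :: "('a, 'b) monoid_scheme" and H :: "'a set" and gs :: "'a list"
  assumes "group G" and "finite (carrier G)"
    and "H \<lhd> G"
    and "derived G (carrier G) \<subseteq> H"
    and "card H dvd card (rcosets\<^bsub>G\<^esub> H)"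
    and "coset_reps G H gs"
  shows "\<forall>g\<in>carrier G.
     (gr_elem (ver_rep G H gs g) - gr_elem \<one>\<^bsub>G\<^esub>)
       - gr_mult G (gr_elem g - gr_elem \<one>\<^bsub>G\<^esub>) (\<Sum>r\<leftarrow>gs. gr_elem r)
     \<in> prod_ideal G (aug_ideal (carrier G)) (aug_ideal H)"
proof
  fix g assume g: "g \<in> carrier G"
  interpret group G by fact
  have sub: "subgroup H G" using normal_imp_subgroup[OF assms(3)] .
  have Hc: "H \<subseteq> carrier G" using sub subgroup.subset by blast
  have fin: "finite (carrier G)" by fact
  have gsc: "set gs \<subseteq> carrier G" and cr: "\<And>x. x \<in> carrier G \<Longrightarrow> \<exists>!i. i < length gs \<and> x \<in> (gs ! i) <#\<^bsub>G\<^esub> H"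
    using assms(6) unfolding coset_reps_def by auto
  have uniq: "r = r'" if u: "r \<in> set gs" "r' \<in> set gs" "x \<in> carrier G" "x \<in> r <#\<^bsub>G\<^esub> H" "x \<in> r' <#\<^bsub>G\<^esub> H" for r r' x
  proof -
    obtain i where i: "i < length gs" "r = gs ! i" using u(1) by (metis in_set_conv_nth)
    obtain j where j: "j < length gs" "r' = gs ! j" using u(2) by (metis in_set_conv_nth)
    have "i = j" using cr[OF u(3)] i j u(4,5) by blast
    then show ?thesis using i j by simp
  qed
  have crep: "coset_rep G H gs x \<in> set gs \<and> x \<in> coset_rep G H gs x <#\<^bsub>G\<^esub> H" if xc: "x \<in> carrier G" for x
  proof -
    obtain i where "i < length gs" "x \<in> (gs ! i) <#\<^bsub>G\<^esub> H" using cr[OF xc] by blast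
    then have "\<exists>!r. r \<in> set gs \<and> x \<in> r <#\<^bsub>G\<^esub> H" using uniq[OF _ _ xc] by (metis nth_mem)
    then show ?thesis unfolding coset_rep_def by (rule theI')
  qed
  have dist: "distinct gs"
  proof (subst distinct_conv_nth, intro allI impI)
    fix i j assume ij: "i < length gs" "j < length gs" "i \<noteq> j"
    show "gs ! i \<noteq> gs ! j"
    proof
      assume eq: "gs ! i = gs ! j"
      have "gs ! i \<in> carrier G" using gsc ij nth_mem by blast
      then have "gs ! i \<in> (gs ! i) <#\<^bsub>G\<^esub> H" using lcos_self sub by blast
      then show False using cr[OF \<open>gs ! i \<in> carrier G\<close>] ij eq by metis
    qed
  qed
  define c where "c r = coset_rep G H gs (g \<otimes>\<^bsub>G\<^esub> r)" for r
  define h where "h r = inv\<^bsub>G\<^esub> (c r) \<otimes>\<^bsub>G\<^esub> (g \<otimes>\<^bsub>G\<^esub> r)" for r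
  have ch: "c r \<in> set gs \<and> h r \<in> H \<and> c r \<otimes>\<^bsub>G\<^esub> h r = g \<otimes>\<^bsub>G\<^esub> r" if rs: "r \<in> set gs" for r
  proof -
    have gr: "g \<otimes>\<^bsub>G\<^esub> r \<in> carrier G" using g gsc rs by blast
    have c1: "c r \<in> set gs" "g \<otimes>\<^bsub>G\<^esub> r \<in> c r <#\<^bsub>G\<^esub> H" using crep[OF gr] unfolding c_def by auto
    then obtain k where k: "k \<in> H" "g \<otimes>\<^bsub>G\<^esub> r = c r \<otimes>\<^bsub>G\<^esub> k" unfolding l_coset_def by blast
    have cc: "c r \<in> carrier G" using c1 gsc by blast
    have kc: "k \<in> carrier G" using k Hc by blast
    have "h r = k" unfolding h_def using k cc kc by (simp add: m_assoc[symmetric])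
    then show ?thesis using c1 k by simp
  qed
  have injc: "inj_on c (set gs)"
  proof
    fix r r' assume r: "r \<in> set gs" and r': "r' \<in> set gs" and eq: "c r = c r'"
    have rc: "r \<in> carrier G" "r' \<in> carrier G" using r r' gsc by auto
    have cc: "c r \<in> carrier G" using ch[OF r] gsc by blast
    have hc: "h r \<in> carrier G" "h r' \<in> carrier G" using ch[OF r] ch[OF r'] Hc by auto
    have e1: "r = inv\<^bsub>G\<^esub> g \<otimes>\<^bsub>G\<^esub> (c r \<otimes>\<^bsub>G\<^esub> h r)" using ch[OF r] g rc by (simp add: m_assoc[symmetric])
    have e2: "r' = inv\<^bsub>G\<^esub> g \<otimes>\<^bsub>G\<^esub> (c r \<otimes>\<^bsub>G\<^esub> h r')" using ch[OF r'] g rc eq by (simp add: m_assoc[symmetric])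
    have alg: "inv\<^bsub>G\<^esub> g \<otimes>\<^bsub>G\<^esub> (C \<otimes>\<^bsub>G\<^esub> y) = (inv\<^bsub>G\<^esub> g \<otimes>\<^bsub>G\<^esub> (C \<otimes>\<^bsub>G\<^esub> x)) \<otimes>\<^bsub>G\<^esub> (inv\<^bsub>G\<^esub> x \<otimes>\<^bsub>G\<^esub> y)"
      if cxy: "C \<in> carrier G" "x \<in> carrier G" "y \<in> carrier G" for C x y
    proof -
      have "x \<otimes>\<^bsub>G\<^esub> (inv\<^bsub>G\<^esub> x \<otimes>\<^bsub>G\<^esub> y) = y" using cxy by (simp add: m_assoc[symmetric])
      then show ?thesis using cxy g by (simp add: m_assoc)
    qed
    have rr: "r \<otimes>\<^bsub>G\<^esub> (inv\<^bsub>G\<^esub> (h r) \<otimes>\<^bsub>G\<^esub> h r') = (inv\<^bsub>G\<^esub> g \<otimes>\<^bsub>G\<^esub> (c r \<otimes>\<^bsub>G\<^esub> h r)) \<otimes>\<^bsub>G\<^esub> (inv\<^bsub>G\<^esub> (h r) \<otimes>\<^bsub>G\<^esub> h r')"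
      using e1 by (rule arg_cong[where f="\<lambda>z. z \<otimes>\<^bsub>G\<^esub> (inv\<^bsub>G\<^esub> (h r) \<otimes>\<^bsub>G\<^esub> h r')"])
    have "r' = r \<otimes>\<^bsub>G\<^esub> (inv\<^bsub>G\<^esub> (h r) \<otimes>\<^bsub>G\<^esub> h r')"
      by (rule trans[OF trans[OF e2 alg[OF cc hc(1) hc(2)]] rr[symmetric]])
    moreover have "inv\<^bsub>G\<^esub> (h r) \<otimes>\<^bsub>G\<^esub> h r' \<in> H" using ch[OF r] ch[OF r'] sub
      by (simp add: subgroup.m_closed subgroup.m_inv_closed)
    ultimately have "r' \<in> r <#\<^bsub>G\<^esub> H" unfolding l_coset_def by blast
    moreover have "r' \<in> r' <#\<^bsub>G\<^esub> H" using lcos_self sub rc by blast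
    ultimately show "r = r'" using uniq[OF r r' rc(2)] by blast
  qed
  have cimg: "c ` set gs = set gs"
    by (rule endo_inj_surj) (use ch injc in auto)
  have V: "ver_rep G H gs g = foldr (\<lambda>r acc. h r \<otimes>\<^bsub>G\<^esub> acc) gs \<one>\<^bsub>G\<^esub>"
    unfolding ver_rep_def h_def c_def by simp
  define T where "T = (\<Sum>r\<leftarrow>gs. gr_elem (h r) - gr_elem \<one>\<^bsub>G\<^esub>)"
  define P where "P = prod_ideal G (aug_ideal (carrier G)) (aug_ideal H)"
  have A: "(gr_elem (ver_rep G H gs g) - gr_elem \<one>\<^bsub>G\<^esub>) - T \<in> P"
    unfolding V T_def P_def using lemA[OF assms(1,2) sub, of gs h] ch by blast
  have M: "gr_mult G (gr_elem g - gr_elem \<one>\<^bsub>G\<^esub>) (\<Sum>r\<leftarrow>gs. gr_elem r) = (\<Sum>r\<leftarrow>gs. gr_elem (g \<otimes>\<^bsub>G\<^esub> r) - gr_elem r)"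
    unfolding gr_mult_sum_list_right
    by (rule arg_cong[where f=sum_list], rule map_cong[OF refl])
       (use g gsc fin in \<open>auto simp: gr_mult_diff_left gr_mult_elem\<close>)
  define K where "K = (\<Sum>r\<leftarrow>gs. gr_elem (c r \<otimes>\<^bsub>G\<^esub> h r) - gr_elem (c r) - gr_elem (h r) + gr_elem \<one>\<^bsub>G\<^esub>)"
  have KP: "K \<in> P" unfolding K_def P_def
    by (rule prod_ideal_sum_list, rule key_mem[OF assms(1,2) sub]) (use ch gsc in auto)
  have sc: "(\<Sum>r\<in>set gs. gr_elem (c r)) = (\<Sum>r\<in>set gs. gr_elem r)"
    using sum.reindex[OF injc, of gr_elem] cimg by simp
  have B: "(\<Sum>r\<leftarrow>gs. gr_elem (g \<otimes>\<^bsub>G\<^esub> r) - gr_elem r) - T = K"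
  proof -
    have "K = (\<Sum>r\<in>set gs. gr_elem (g \<otimes>\<^bsub>G\<^esub> r) - gr_elem (c r) - gr_elem (h r) + gr_elem \<one>\<^bsub>G\<^esub>)"
      unfolding K_def sum_list_distinct_conv_sum_set[OF dist] using ch by (intro sum.cong) auto
    then show ?thesis unfolding T_def sum_list_distinct_conv_sum_set[OF dist]
      using sc by (simp add: sum.distrib sum_subtractf algebra_simps)
  qed
  have "(gr_elem (ver_rep G H gs g) - gr_elem \<one>\<^bsub>G\<^esub>) - gr_mult G (gr_elem g - gr_elem \<one>\<^bsub>G\<^esub>) (\<Sum>r\<leftarrow>gs. gr_elem r)
     = ((gr_elem (ver_rep G H gs g) - gr_elem \<one>\<^bsub>G\<^esub>) - T) - K"
    unfolding M B[symmetric] by (simp add: algebra_simps)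
  also have "\<dots> \<in> P" by (rule prod_ideal_diff[OF A[unfolded P_def] KP[unfolded P_def], folded P_def])
  finally show "(gr_elem (ver_rep G H gs g) - gr_elem \<one>\<^bsub>G\<^esub>) - gr_mult G (gr_elem g - gr_elem \<one>\<^bsub>G\<^esub>) (\<Sum>r\<leftarrow>gs. gr_elem r)
     \<in> prod_ideal G (aug_ideal (carrier G)) (aug_ideal H)" unfolding P_def .
qed
end
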